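(* Let $r\in(0,\infty)$, let $p\in(0,\infty)$, let $u\in\mathbb{S}^{n-1}$, let $H=\{x\in\mathbb{R}^n:\langle x,u\rangle=0\}$, and let $K\subset\mathbb{R}^n$ be a compact set with non-empty interior. Let $f:\mathbb{R}\to\mathbb{R}_{\geq0}$, $f(t)=\mathrm{vol}_{n-1}\bigl(K\cap(tu+H)\bigr)$, be $p$-concave with support $[a,b]$, and assume $\frac{\int_a^b t f(t)^r\,dt}{\int_a^b f(t)^r\,dt}=0$. Let $K^-=K\cap\{x:\langle x,u\rangle\leq0\}$. Then \[\frac{\mathrm{vol}(K^-)}{\mathrm{vol}(K)}\geq\left(\frac{p}{2p+r}\right)^{(p+1)/p}.\]
   Context: $\mathrm{vol}_k$ denotes $k$-dimensional Lebesgue measure, $\mathrm{vol}=\mathrm{vol}_n$. A function $\varphi\geq0$ is $p$-concave ($p>0$) if $\varphi((1-\lambda)x+\lambda y)\geq((1-\lambda)\varphi(x)^p+\lambda\varphi(y)^p)^{1/p}$ whenever $\varphi(x)\varphi(y)>0$, $\lambda\in(0,1)$. *)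

theory Defs
  imports "HOL-Analysis.Analysis"
begin

definition p_concave :: "real \<Rightarrow> (real \<Rightarrow> real) \<Rightarrow> bool" where
  "p_concave p \<phi> \<longleftrightarrow> (\<forall>x. \<phi> x \<ge> 0) \<and>
     (\<forall>x y l. \<phi> x * \<phi> y > 0 \<longrightarrow> 0 < l \<longrightarrow> l < 1 \<longrightarrow>
        \<phi> ((1 - l) * x + l * y) \<ge> ((1 - l) * \<phi> x powr p + l * \<phi> y powr p) powr (1 / p))"

definition fun_support :: "(real \<Rightarrow> real) \<Rightarrow> real set" where
  "fun_support \<phi> = closure {t. \<phi> t \<noteq> 0}"

end

theory Submission
  imports Defs
begin


lemma boxmap_inner:
  fixes L :: "'c::euclidean_space \<Rightarrow> 'd::euclidean_space" and \<tau> :: "'c \<Rightarrow> 'd"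
  assumes lin: "linear L" and bij: "bij_betw \<tau> Basis Basis" and Lb: "\<And>b. b \<in> Basis \<Longrightarrow> L b = \<tau> b"
    and b: "b \<in> Basis"
  shows "L x \<bullet> \<tau> b = x \<bullet> b"
proof -
  have "L x = L (\<Sum>(b'::'c)\<in>Basis. (x \<bullet> b') *\<^sub>R b')" by (simp add: euclidean_representation)
  also have "\<dots> = (\<Sum>b'\<in>Basis. (x \<bullet> b') *\<^sub>R \<tau> b')"
    using lin Lb by (simp add: linear_sum linear_scale)
  finally have "L x \<bullet> \<tau> b = (\<Sum>b'\<in>Basis. (x \<bullet> b') * (\<tau> b' \<bullet> \<tau> b))"
    by (simp add: inner_sum_left)
  also have "\<dots> = (\<Sum>b'\<in>Basis. if b' = b then x \<bullet> b else 0)"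
  proof (rule sum.cong)
    fix b' :: 'c assume b': "b' \<in> Basis"
    have "\<tau> b' \<in> Basis" "\<tau> b \<in> Basis" using bij b b' by (auto simp: bij_betw_def)
    moreover have "\<tau> b' = \<tau> b \<longleftrightarrow> b' = b" using bij b b' by (auto simp: bij_betw_def inj_on_def)
    ultimately show "(x \<bullet> b') * (\<tau> b' \<bullet> \<tau> b) = (if b' = b then x \<bullet> b else 0)"
      by (auto simp: inner_Basis)
  qed simp
  also have "\<dots> = x \<bullet> b" using b by simp
  finally show ?thesis .
qed

lemma boxmap_lborel:
  fixes L :: "'c::euclidean_space \<Rightarrow> 'd::euclidean_space" and \<tau> :: "'c \<Rightarrow> 'd"
  assumes lin: "linear L" and bij: "bij_betw \<tau> Basis Basis" and Lb: "\<And>b. b \<in> Basis \<Longrightarrow> L b = \<tau> b"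
  shows "distr lborel borel L = lborel"
proof (rule lborel_eqI[symmetric])
  have inn: "\<And>x b. b \<in> Basis \<Longrightarrow> L x \<bullet> \<tau> b = x \<bullet> b"
    using boxmap_inner[OF lin bij Lb] by blast
  have Lm[measurable]: "L \<in> borel_measurable borel"
    by (intro borel_measurable_continuous_onI linear_continuous_on linear_conv_bounded_linear[THEN iffD1] lin)
  fix l u :: 'd
  assume le: "\<And>b. b \<in> Basis \<Longrightarrow> l \<bullet> b \<le> u \<bullet> b"
  define l' where "l' = (\<Sum>b\<in>Basis. (l \<bullet> \<tau> b) *\<^sub>R b)"
  define u' where "u' = (\<Sum>b\<in>Basis. (u \<bullet> \<tau> b) *\<^sub>R b)"
  have l'b: "l' \<bullet> b = l \<bullet> \<tau> b" if "b \<in> Basis" for b using that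
    by (simp add: l'_def inner_sum_left inner_Basis if_distrib cong: if_cong)
  have u'b: "u' \<bullet> b = u \<bullet> \<tau> b" if "b \<in> Basis" for b using that
    by (simp add: u'_def inner_sum_left inner_Basis if_distrib cong: if_cong)
  have allB: "(\<forall>d\<in>Basis. P d) \<longleftrightarrow> (\<forall>b\<in>Basis. P (\<tau> b))" for P :: "'d \<Rightarrow> bool"
    using bij by (auto simp: bij_betw_def) (metis image_iff)
  have pre: "L -` box l u = box l' u'"
    by (auto simp: mem_box allB inn l'b u'b)
  have tb: "b \<in> Basis \<Longrightarrow> \<tau> b \<in> Basis" for b using bij by (auto simp: bij_betw_def)
  have "emeasure (distr lborel borel L) (box l u) = emeasure lborel (box l' u')"
    by (simp add: emeasure_distr pre)
  also have "\<dots> = (\<Prod>b\<in>Basis. (u' - l') \<bullet> b)"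
    using le tb by (simp add: emeasure_lborel_box_eq inner_diff_left l'b u'b)
  also have "\<dots> = (\<Prod>b\<in>Basis. (u - l) \<bullet> \<tau> b)"
    by (simp add: inner_diff_left l'b u'b)
  also have "\<dots> = (\<Prod>d\<in>Basis. (u - l) \<bullet> d)"
    using prod.reindex_bij_betw[OF bij, of "\<lambda>d. (u - l) \<bullet> d"] by simp
  finally show "emeasure (distr lborel borel L) (box l u) = (\<Prod>b\<in>Basis. (u - l) \<bullet> b)" .
qed simp

lemma boxmap_inj:
  fixes L :: "'c::euclidean_space \<Rightarrow> 'd::euclidean_space" and \<tau> :: "'c \<Rightarrow> 'd"
  assumes lin: "linear L" and bij: "bij_betw \<tau> Basis Basis" and Lb: "\<And>b. b \<in> Basis \<Longrightarrow> L b = \<tau> b"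
  shows "inj L"
proof (rule injI)
  fix x y assume "L x = L y"
  then show "x = y" using boxmap_inner[OF lin bij Lb] by (metis euclidean_eqI)
qed

lemma boxmap_measure:
  fixes L :: "'c::euclidean_space \<Rightarrow> 'd::euclidean_space" and \<tau> :: "'c \<Rightarrow> 'd"
  assumes lin: "linear L" and bij: "bij_betw \<tau> Basis Basis" and Lb: "\<And>b. b \<in> Basis \<Longrightarrow> L b = \<tau> b"
    and S: "compact S"
  shows "measure lborel (L ` S) = measure lborel S"
proof -
  have Lm[measurable]: "L \<in> borel_measurable borel"
    by (intro borel_measurable_continuous_onI linear_continuous_on linear_conv_bounded_linear[THEN iffD1] lin)
  have "compact (L ` S)"
    by (intro compact_continuous_image S linear_continuous_on linear_conv_bounded_linear[THEN iffD1] lin)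
  then have "L ` S \<in> sets borel" by (simp add: borel_compact)
  then have "measure lborel (L ` S) = measure (distr lborel borel L) (L ` S)"
    by (simp add: boxmap_lborel[OF lin bij Lb])
  also have "\<dots> = measure lborel (L -` (L ` S))"
    using \<open>L ` S \<in> sets borel\<close> by (simp add: measure_distr)
  also have "L -` (L ` S) = S" using boxmap_inj[OF lin bij Lb] by (simp add: inj_vimage_image_eq)
  finally show ?thesis .
qed



lemma boxmap_inner2:
  fixes L :: "'c::euclidean_space \<Rightarrow> 'd::euclidean_space" and \<tau> :: "'c \<Rightarrow> 'd"
  assumes lin: "linear L" and bij: "bij_betw \<tau> Basis Basis" and Lb: "\<And>b. b \<in> Basis \<Longrightarrow> L b = \<tau> b"
  shows "L x \<bullet> L y = x \<bullet> y"
proof -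
  have "L x \<bullet> L y = (\<Sum>d\<in>Basis. (L x \<bullet> d) * (L y \<bullet> d))" by (rule euclidean_inner)
  also have "\<dots> = (\<Sum>b\<in>Basis. (L x \<bullet> \<tau> b) * (L y \<bullet> \<tau> b))"
    using sum.reindex_bij_betw[OF bij, of "\<lambda>d. (L x \<bullet> d) * (L y \<bullet> d)"] by simp
  also have "\<dots> = (\<Sum>b\<in>Basis. (x \<bullet> b) * (y \<bullet> b))"
    using boxmap_inner[OF lin bij Lb] by simp
  also have "\<dots> = x \<bullet> y" by (rule euclidean_inner[symmetric])
  finally show ?thesis .
qed

lemma boxmap_norm:
  fixes L :: "'c::euclidean_space \<Rightarrow> 'd::euclidean_space" and \<tau> :: "'c \<Rightarrow> 'd"
  assumes lin: "linear L" and bij: "bij_betw \<tau> Basis Basis" and Lb: "\<And>b. b \<in> Basis \<Longrightarrow> L b = \<tau> b"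
  shows "norm (L x) = norm x"
  using boxmap_inner2[OF lin bij Lb, of x x] by (simp add: norm_eq_sqrt_inner)

typedef (overloaded) ('a::euclidean_space) bidx = "Basis :: 'a set"
  using nonempty_Basis by blast

instance bidx :: (euclidean_space) finite
proof
  have "(UNIV :: 'a bidx set) = Abs_bidx ` Basis"
    using type_definition.Abs_image[OF type_definition_bidx] by metis
  then show "finite (UNIV :: 'a bidx set)" by (metis finite_Basis finite_imageI)
qed

definition bidx_enc :: "'a::euclidean_space bidx \<Rightarrow> nat" where
  "bidx_enc = (SOME f. inj f)"

lemma inj_bidx_enc: "inj bidx_enc"
proof -
  obtain f :: "'a bidx \<Rightarrow> nat" and n where "inj_on f UNIV"
    using finite_imp_inj_to_nat_seg[of "UNIV :: 'a bidx set"] by auto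
  then have "\<exists>f :: 'a bidx \<Rightarrow> nat. inj f" by blast
  then show ?thesis unfolding bidx_enc_def by (rule someI_ex)
qed

instantiation bidx :: (euclidean_space) linorder
begin
definition less_eq_bidx :: "'a bidx \<Rightarrow> 'a bidx \<Rightarrow> bool" where
  "less_eq_bidx x y \<longleftrightarrow> bidx_enc x \<le> bidx_enc y"
definition less_bidx :: "'a bidx \<Rightarrow> 'a bidx \<Rightarrow> bool" where
  "less_bidx x y \<longleftrightarrow> bidx_enc x < bidx_enc y"
instance
  by standard (auto simp: less_eq_bidx_def less_bidx_def inj_eq[OF inj_bidx_enc])
end

instance bidx :: (euclidean_space) wellorder
proof
  fix P :: "'a bidx \<Rightarrow> bool" and a
  assume H: "\<And>x. (\<And>y. y < x \<Longrightarrow> P y) \<Longrightarrow> P x"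
  show "P a"
  proof (induct "bidx_enc a" arbitrary: a rule: less_induct)
    case less
    then show ?case using H by (auto simp: less_bidx_def)
  qed
qed

lemma card_bidx: "CARD('a::euclidean_space bidx) = DIM('a)"
proof -
  have "(UNIV :: 'a bidx set) = Abs_bidx ` Basis"
    using type_definition.Abs_image[OF type_definition_bidx] by metis
  moreover have "inj_on (Abs_bidx :: 'a \<Rightarrow> 'a bidx) Basis"
    by (meson Abs_bidx_inject inj_onI)
  ultimately show ?thesis by (metis card_image)
qed

definition Phi :: "'a::euclidean_space \<Rightarrow> real ^ ('a bidx)" where
  "Phi x = (\<chi> i. x \<bullet> Rep_bidx i)"

lemma Phi_linear: "linear Phi"
  by (rule linearI) (simp_all add: Phi_def vec_eq_iff inner_add_left)

lemma Phi_bij: "bij_betw (\<lambda>b::'a::euclidean_space. axis (Abs_bidx b) (1::real)) Basis Basis"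
proof (rule bij_betw_imageI)
  show "inj_on (\<lambda>b::'a. axis (Abs_bidx b) (1::real)) Basis"
    by (auto simp: inj_on_def axis_eq_axis Abs_bidx_inject)
  show "(\<lambda>b::'a. axis (Abs_bidx b) (1::real)) ` Basis = Basis"
  proof
    show "(\<lambda>b::'a. axis (Abs_bidx b) (1::real)) ` Basis \<subseteq> Basis" by auto
    show "Basis \<subseteq> (\<lambda>b::'a. axis (Abs_bidx b) (1::real)) ` Basis"
    proof
      fix v :: "real ^ 'a bidx" assume "v \<in> Basis"
      then obtain i where v: "v = axis i 1" using axis_inverse by blast
      have "Rep_bidx i \<in> Basis" using Rep_bidx by blast
      moreover have "Abs_bidx (Rep_bidx i) = i" by (rule Rep_bidx_inverse)
      ultimately show "v \<in> (\<lambda>b::'a. axis (Abs_bidx b) (1::real)) ` Basis" using v by force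
    qed
  qed
qed

lemma Phi_basis: "b \<in> Basis \<Longrightarrow> Phi b = axis (Abs_bidx b) (1::real)"
proof -
  assume b: "b \<in> Basis"
  have "b \<bullet> Rep_bidx i = (if i = Abs_bidx b then 1 else 0)" for i
  proof -
    have "Rep_bidx i \<in> Basis" using Rep_bidx by blast
    moreover have "b = Rep_bidx i \<longleftrightarrow> i = Abs_bidx b"
      using b by (metis Abs_bidx_inverse Rep_bidx_inverse)
    ultimately show ?thesis using b by (auto simp: inner_Basis)
  qed
  then show ?thesis by (simp add: Phi_def axis_def vec_eq_iff)
qed

lemma isometry_measure:
  fixes \<Lambda> :: "'c::euclidean_space \<Rightarrow> 'a::euclidean_space"
  assumes lin: "linear \<Lambda>" and iso: "\<And>x. norm (\<Lambda> x) = norm x"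
    and dim: "DIM('c) = DIM('a)" and S: "compact S"
  shows "measure lborel (\<Lambda> ` S) = measure lborel S"
proof -
  have "card (Basis :: 'c set) = card (Basis :: (real ^ 'a bidx) set)"
    using dim card_bidx[where 'a='a] by simp
  then obtain \<tau> :: "'c \<Rightarrow> real ^ 'a bidx" where tau: "bij_betw \<tau> Basis Basis"
    using finite_same_card_bij[of "Basis :: 'c set" "Basis :: (real ^ 'a bidx) set"] by auto
  define \<psi> where "\<psi> x = (\<Sum>b\<in>Basis. (x \<bullet> b) *\<^sub>R \<tau> b)" for x :: 'c
  define \<psi>' where "\<psi>' v = (\<Sum>b\<in>Basis. (v \<bullet> \<tau> b) *\<^sub>R b)" for v :: "real ^ 'a bidx"
  have psi_lin: "linear \<psi>" unfolding \<psi>_def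
    by (rule linearI) (simp_all add: inner_add_left scaleR_add_left sum.distrib scaleR_sum_right)
  have psi'_lin: "linear \<psi>'" unfolding \<psi>'_def
    by (rule linearI) (simp_all add: inner_add_left scaleR_add_left sum.distrib scaleR_sum_right)
  have psi_b: "\<psi> b = \<tau> b" if "b \<in> Basis" for b
  proof -
    have "\<psi> b = (\<Sum>ba\<in>Basis. if ba = b then \<tau> ba else 0)"
      unfolding \<psi>_def by (rule sum.cong) (use that in \<open>auto simp: inner_Basis\<close>)
    also have "\<dots> = \<tau> b" using that by (simp add: sum.delta')
    finally show ?thesis .
  qed
  have tau': "bij_betw (inv_into Basis \<tau>) Basis Basis" by (rule bij_betw_inv_into[OF tau])
  have psi'_b: "\<psi>' d = inv_into Basis \<tau> d" if "d \<in> Basis" for d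
  proof -
    have "d \<in> \<tau> ` Basis" using tau that by (simp add: bij_betw_def)
    then obtain b where b: "b \<in> Basis" "d = \<tau> b" by auto
    have "\<psi>' d = (\<Sum>b'\<in>Basis. if b' = b then b' else 0)"
      unfolding \<psi>'_def
    proof (rule sum.cong)
      fix b' :: 'c assume b': "b' \<in> Basis"
      have "\<tau> b' \<in> Basis" "\<tau> b \<in> Basis" using tau b b' by (auto simp: bij_betw_def)
      moreover have "\<tau> b' = \<tau> b \<longleftrightarrow> b' = b" using tau b b' by (auto simp: bij_betw_def inj_on_def)
      ultimately show "(d \<bullet> \<tau> b') *\<^sub>R b' = (if b' = b then b' else 0)"
        using b by (auto simp: inner_Basis)
    qed simp
    also have "\<dots> = b" using b by (simp add: sum.delta')
    also have "b = inv_into Basis \<tau> d" using b tau by (simp add: bij_betw_def)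
    finally show ?thesis .
  qed
  have psi'psi: "\<psi>' (\<psi> x) = x" for x
  proof (rule euclidean_eqI)
    fix b :: 'c assume b: "b \<in> Basis"
    have "\<psi>' (\<psi> x) \<bullet> b = \<psi> x \<bullet> \<tau> b"
      using b by (simp add: \<psi>'_def inner_sum_left inner_Basis if_distrib cong: if_cong)
    also have "\<dots> = x \<bullet> b" using boxmap_inner[OF psi_lin tau psi_b b] .
    finally show "\<psi>' (\<psi> x) \<bullet> b = x \<bullet> b" .
  qed
  define M where "M = Phi \<circ> \<Lambda> \<circ> \<psi>'"
  have M_orth: "orthogonal_transformation M"
    unfolding orthogonal_transformation
  proof
    show "linear M" unfolding M_def
      by (intro linear_compose Phi_linear lin psi'_lin)
    have Phin: "norm (Phi x) = norm x" for x :: 'a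
      by (rule boxmap_norm[OF Phi_linear Phi_bij]) (rule Phi_basis)
    have psin: "norm (\<psi>' x) = norm x" for x
      by (rule boxmap_norm[OF psi'_lin tau']) (rule psi'_b)
    show "\<forall>v. norm (M v) = norm v"
      using Phin iso psin by (simp add: M_def)
  qed
  have cont: "continuous_on UNIV F" if "linear F" for F :: "'x::euclidean_space \<Rightarrow> 'y::euclidean_space"
    by (intro linear_continuous_on linear_conv_bounded_linear[THEN iffD1] that)
  have cS1: "compact (\<Lambda> ` S)" by (intro compact_continuous_image S continuous_on_subset[OF cont[OF lin]]) auto
  have cS2: "compact (\<psi> ` S)" by (intro compact_continuous_image S continuous_on_subset[OF cont[OF psi_lin]]) auto
  have cS3: "compact (M ` \<psi> ` S)"
    by (intro compact_continuous_image cS2 continuous_on_subset[OF cont[OF orthogonal_transformation_linear[OF M_orth]]]) auto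
  have img: "M ` \<psi> ` S = Phi ` \<Lambda> ` S"
    by (simp add: image_image M_def psi'psi)
  have "measure lborel (\<Lambda> ` S) = measure lborel (Phi ` \<Lambda> ` S)"
    by (rule boxmap_measure[OF Phi_linear Phi_bij _ cS1, symmetric]) (rule Phi_basis)
  also have "\<dots> = measure lebesgue (M ` \<psi> ` S)"
    using cS3 img by (simp add: borel_compact)
  also have "\<dots> = measure lebesgue (\<psi> ` S)"
    by (rule measure_orthogonal_image[OF M_orth lmeasurable_compact[OF cS2]])
  also have "\<dots> = measure lborel (\<psi> ` S)"
    using cS2 by (simp add: borel_compact)
  also have "\<dots> = measure lborel S"
    by (rule boxmap_measure[OF psi_lin tau psi_b S])
  finally show ?thesis .
qed



lemma section_lemma:
  fixes S :: "'a::euclidean_space set" and u :: 'a and g :: "'b::euclidean_space \<Rightarrow> 'a"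
  assumes u: "norm u = 1"
    and dim: "DIM('b) + 1 = DIM('a)"
    and g_lin: "linear g" and g_iso: "\<And>y. norm (g y) = norm y"
    and g_range: "range g = {x. x \<bullet> u = 0}"
    and S: "compact S"
  shows "(\<lambda>t. measure lborel {y. t *\<^sub>R u + g y \<in> S}) \<in> borel_measurable borel"
    and "((\<lambda>t. measure lborel {y. t *\<^sub>R u + g y \<in> S}) has_integral measure lborel S) UNIV"
    and "\<exists>B. \<forall>t. measure lborel {y. t *\<^sub>R u + g y \<in> S} \<le> B"
    and "\<And>t. compact {y. t *\<^sub>R u + g y \<in> S}"
proof -
  define \<Lambda> where "\<Lambda> z = fst z *\<^sub>R u + g (snd z)" for z :: "real \<times> 'b"
  have lin: "linear \<Lambda>" unfolding \<Lambda>_def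
    by (rule linearI) (simp_all add: linear_add[OF g_lin] linear_scale[OF g_lin] scaleR_add_left algebra_simps)
  have uu: "u \<bullet> u = 1" using u by (simp add: norm_eq_sqrt_inner)
  have ug: "u \<bullet> g y = 0" for y
  proof -
    have "g y \<in> range g" by simp
    then show ?thesis using g_range by (simp add: inner_commute)
  qed
  have iso: "norm (\<Lambda> z) = norm z" for z
  proof -
    obtain t y where z: "z = (t, y)" by (cases z)
    have "norm (\<Lambda> z)^2 = \<Lambda> z \<bullet> \<Lambda> z" by (simp add: power2_norm_eq_inner)
    also have "\<dots> = t^2 * (u \<bullet> u) + 2 * t * (u \<bullet> g y) + g y \<bullet> g y"
      by (simp add: \<Lambda>_def z inner_add_left inner_add_right inner_commute power2_eq_square algebra_simps)
    also have "\<dots> = t^2 + norm y ^ 2"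
      using uu ug g_iso by (simp add: power2_norm_eq_inner[symmetric])
    also have "\<dots> = norm z ^ 2" by (simp add: z norm_Pair)
    finally show ?thesis by (simp add: power2_eq_iff_nonneg)
  qed
  have cont: "continuous_on A \<Lambda>" for A
    by (intro linear_continuous_on linear_conv_bounded_linear[THEN iffD1] lin)
  define C where "C = \<Lambda> -` S"
  have surj: "\<Lambda> ` C = S"
  proof
    show "\<Lambda> ` C \<subseteq> S" by (auto simp: C_def)
    show "S \<subseteq> \<Lambda> ` C"
    proof
      fix x assume x: "x \<in> S"
      have "(x - (x \<bullet> u) *\<^sub>R u) \<bullet> u = 0" using uu by (simp add: inner_diff_left)
      then have "x - (x \<bullet> u) *\<^sub>R u \<in> range g" using g_range by simp
      then obtain y where y: "g y = x - (x \<bullet> u) *\<^sub>R u" by auto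
      have e: "\<Lambda> (x \<bullet> u, y) = x" by (simp add: \<Lambda>_def y)
      then have "(x \<bullet> u, y) \<in> C" using x by (simp add: C_def)
      then show "x \<in> \<Lambda> ` C" using e by (rule rev_image_eqI[OF _ sym])
    qed
  qed
  obtain R where R: "\<And>x. x \<in> S \<Longrightarrow> norm x \<le> R"
    using compact_imp_bounded[OF S] by (auto simp: bounded_iff)
  have Ccomp: "compact C"
  proof (subst compact_eq_bounded_closed, intro conjI)
    show "closed C" unfolding C_def
      by (intro continuous_closed_vimage compact_imp_closed[OF S] linear_continuous_at linear_conv_bounded_linear[THEN iffD1] lin)
    show "bounded C" unfolding bounded_iff C_def
    proof (intro exI ballI)
      fix z assume "z \<in> \<Lambda> -` S"
      then have "norm (\<Lambda> z) \<le> R" using R by simp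
      then show "norm z \<le> R" by (simp only: iso)
    qed
  qed
  have meas_eq: "measure lborel S = measure lborel C"
    using isometry_measure[OF lin iso _ Ccomp] dim surj by simp
  have sect: "Pair t -` C = {y. t *\<^sub>R u + g y \<in> S}" for t
    by (auto simp: C_def \<Lambda>_def)
  show sect_comp: "compact {y. t *\<^sub>R u + g y \<in> S}" for t
  proof (subst compact_eq_bounded_closed, intro conjI)
    have "{y. t *\<^sub>R u + g y \<in> S} = (\<lambda>y. \<Lambda> (t, y)) -` S" by (auto simp: \<Lambda>_def)
    moreover have "continuous_on UNIV (\<lambda>y. \<Lambda> (t, y))"
      by (intro continuous_on_compose2[OF cont[of UNIV]] continuous_intros) auto
    ultimately show "closed {y. t *\<^sub>R u + g y \<in> S}"
      using continuous_closed_vimage compact_imp_closed[OF S]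
      by (metis closed_vimage continuous_on_closed_vimage closed_UNIV vimage_def)
    show "bounded {y. t *\<^sub>R u + g y \<in> S}"
      unfolding bounded_iff
    proof (intro exI allI impI ballI)
      fix y assume "y \<in> {y. t *\<^sub>R u + g y \<in> S}"
      then have "norm (\<Lambda> (t, y)) \<le> R" using R by (simp add: \<Lambda>_def)
      then have "norm (t, y) \<le> R" by (simp only: iso)
      then show "norm y \<le> R" using norm_snd_le[of y t] by simp
    qed
  qed
  have Csets: "C \<in> sets (lborel \<Otimes>\<^sub>M lborel)"
    unfolding lborel_prod using Ccomp by (simp add: borel_compact)
  have emC: "emeasure (lborel \<Otimes>\<^sub>M lborel) C = (\<integral>\<^sup>+t. emeasure lborel (Pair t -` C) \<partial>lborel)"
    by (rule lborel.emeasure_pair_measure_alt[OF Csets])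
  define h where "h t = measure lborel {y. t *\<^sub>R u + g y \<in> S}" for t
  have hm: "h \<in> borel_measurable borel"
  proof -
    have "(\<lambda>t. emeasure lborel (Pair t -` C)) \<in> borel_measurable lborel"
      by (rule lborel.measurable_emeasure_Pair[OF Csets])
    then have "(\<lambda>t. enn2real (emeasure lborel (Pair t -` C))) \<in> borel_measurable lborel"
      by measurable
    then show ?thesis unfolding h_def[abs_def] measure_def by (simp add: sect)
  qed
  then show "(\<lambda>t. measure lborel {y. t *\<^sub>R u + g y \<in> S}) \<in> borel_measurable borel"
    unfolding h_def[abs_def] .
  have emfin: "emeasure lborel (Pair t -` C) = ennreal (h t)" for t
  proof -
    have "emeasure lborel {y. t *\<^sub>R u + g y \<in> S} \<noteq> \<infinity>"
      using emeasure_compact_finite[OF sect_comp[of t]] by simp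
    then show ?thesis by (simp add: h_def sect emeasure_eq_ennreal_measure)
  qed
  have "(\<integral>\<^sup>+t. ennreal (h t) \<partial>lborel) = emeasure (lborel \<Otimes>\<^sub>M lborel) C"
    by (simp add: emC emfin)
  also have "\<dots> = ennreal (measure lborel S)"
  proof -
    have "emeasure lborel C \<noteq> \<infinity>"
      using emeasure_compact_finite[OF Ccomp] by simp
    then show ?thesis by (simp add: lborel_prod meas_eq emeasure_eq_ennreal_measure)
  qed
  finally have "(\<integral>\<^sup>+t. ennreal (h t) \<partial>lborel) = ennreal (measure lborel S)" .
  then have "(h has_integral measure lborel S) UNIV"
    by (intro nn_integral_has_integral hm) (auto simp: h_def)
  then show "((\<lambda>t. measure lborel {y. t *\<^sub>R u + g y \<in> S}) has_integral measure lborel S) UNIV"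
    unfolding h_def[abs_def] .
  show "\<exists>B. \<forall>t. measure lborel {y. t *\<^sub>R u + g y \<in> S} \<le> B"
  proof (intro exI allI)
    fix t
    have sub: "{y. t *\<^sub>R u + g y \<in> S} \<subseteq> cball 0 R"
    proof
      fix y assume "y \<in> {y. t *\<^sub>R u + g y \<in> S}"
      then have "norm (\<Lambda> (t, y)) \<le> R" using R by (simp add: \<Lambda>_def)
      then have "norm (t, y) \<le> R" by (simp only: iso)
      moreover have "norm y \<le> norm (t, y)" using norm_snd_le[of y t] by simp
      ultimately show "y \<in> cball 0 R" by simp
    qed
    show "measure lborel {y. t *\<^sub>R u + g y \<in> S} \<le> measure lborel (cball (0::'b) R)"
      using sub sect_comp[of t]
      by (intro measure_mono_fmeasurable fmeasurable_compact) (auto simp: borel_compact)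
  qed
qed



lemma lim_right_bound:
  fixes \<phi> :: "real \<Rightarrow> real"
  assumes "c < e" "\<And>z. c < z \<Longrightarrow> z < e \<Longrightarrow> \<phi> z \<le> K" "(\<phi> \<longlongrightarrow> L) (at_right c)"
  shows "L \<le> K"
proof (rule tendsto_le[OF trivial_limit_at_right_real tendsto_const assms(3)])
  show "\<forall>\<^sub>F x in at_right c. \<phi> x \<le> K"
    by (rule eventually_at_rightI[OF _ assms(1)]) (auto intro: assms(2))
qed

lemma lim_left_bound:
  fixes \<phi> :: "real \<Rightarrow> real"
  assumes "c < e" "\<And>z. c < z \<Longrightarrow> z < e \<Longrightarrow> \<phi> z \<le> K" "(\<phi> \<longlongrightarrow> L) (at_left e)"
  shows "L \<le> K"
proof (rule tendsto_le[OF trivial_limit_at_left_real tendsto_const assms(3)])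
  show "\<forall>\<^sub>F x in at_left e. \<phi> x \<le> K"
    by (rule eventually_at_leftI[OF _ assms(1)]) (auto intro: assms(2))
qed

lemma pc_pow:
  fixes z X Y p :: real
  assumes "p > 0" "0 \<le> Y" "Y \<le> X" "X powr (1/p) \<le> z"
  shows "Y \<le> z powr p"
proof -
  have X: "0 \<le> X" using assms by linarith
  have "X = (X powr (1/p)) powr p" using assms(1) X by (simp add: powr_powr)
  also have "\<dots> \<le> z powr p" by (rule powr_mono2) (use assms in auto)
  finally show ?thesis using assms by linarith
qed

lemma pow_back:
  fixes p l u v :: real
  assumes "p > 0" "0 \<le> l" "0 \<le> u" "0 \<le> v" "l * u powr p \<le> v powr p"
  shows "l powr (1/p) * u \<le> v"
proof -
  have "(l * u powr p) powr (1/p) \<le> (v powr p) powr (1/p)"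
    by (rule powr_mono2) (use assms in auto)
  moreover have "(l * u powr p) powr (1/p) = l powr (1/p) * u"
    using assms by (simp add: powr_mult powr_powr)
  moreover have "(v powr p) powr (1/p) = v"
    using assms by (simp add: powr_powr)
  ultimately show ?thesis by simp
qed

lemma dpow:
  fixes b e x :: real
  assumes "x < b"
  shows "((\<lambda>t. (b - t) powr e) has_real_derivative (- e * (b - x) powr (e - 1))) (at x)"
proof -
  have z: "b - x > 0" using assms by simp
  have d: "((\<lambda>t. b - t) has_real_derivative (0 - 1)) (at x)"
    by (rule DERIV_diff[OF DERIV_const DERIV_ident])
  have "((\<lambda>t. (b - t) powr e) has_real_derivative (e * (b - x) powr (e - 1)) * (0 - 1)) (at x)"
    by (rule DERIV_chain2[OF has_real_derivative_powr[OF z] d])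
  then show ?thesis by simp
qed

lemma aff_e1: "(l::real) > 0 \<Longrightarrow> (1 / l) * a + - ((1 / l) * (a - l * a)) = a"
  by (simp add: field_simps)

lemma aff_e3: "(l::real) > 0 \<Longrightarrow> (1 / l) * d + - ((1 / l) * (a - l * a)) = (1 / l) * (d - a) + a"
  by (simp add: field_simps)

lemma aff_e2:
  fixes a b d :: real
  assumes "b > a" "d > a"
  shows "(1 / ((d - a) / (b - a))) * d + - ((1 / ((d - a) / (b - a))) * (a - ((d - a) / (b - a)) * a)) = b"
proof -
  have l: "(d - a) / (b - a) > 0" using assms by simp
  have "(1 / ((d - a) / (b - a))) * (d - a) = b - a" using assms by simp
  then show ?thesis using aff_e3[OF l, of d a] by simp
qed

lemma oneD:
  fixes f :: "real \<Rightarrow> real" and r p a b B V :: real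
  assumes r: "r > 0" and p: "p > 0"
    and f_conc: "p_concave p f"
    and fm: "f \<in> borel_measurable borel"
    and fB: "\<And>t. f t \<le> B"
    and f_supp: "fun_support f = {a..b}"
    and fI: "(f has_integral V) {a..b}" and Vpos: "V > 0"
    and bary: "integral {a..b} (\<lambda>t. t * f t powr r) / integral {a..b} (\<lambda>t. f t powr r) = 0"
  shows "a < 0 \<and> a < b \<and> (p / (2 * p + r)) powr ((p + 1) / p) * V \<le> integral {a..min 0 b} f"
proof -
  have f0: "\<And>t. f t \<ge> 0" using f_conc by (simp add: p_concave_def)
  have pc: "\<And>x y l. f x * f y > 0 \<Longrightarrow> 0 < l \<Longrightarrow> l < 1 \<Longrightarrow>
        ((1 - l) * f x powr p + l * f y powr p) powr (1 / p) \<le> f ((1 - l) * x + l * y)"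
    using f_conc by (simp add: p_concave_def)
  have out: "f t = 0" if "t \<notin> {a..b}" for t
    using that closure_subset[of "{t. f t \<noteq> 0}"] f_supp by (auto simp: fun_support_def)
  have ab: "a < b"
  proof (rule ccontr)
    assume "\<not> a < b"
    then have "Henstock_Kurzweil_Integration.content (cbox a b) = 0" by simp
    then have "(f has_integral V) (cbox a b) \<longleftrightarrow> V = 0" by (rule has_integral_null_eq)
    then show False using fI Vpos by simp
  qed
  define P where "P = {t. f t \<noteq> 0}"
  have convP: "convex P"
    unfolding convex_alt
  proof (intro ballI allI impI)
    fix x y and l :: real assume x: "x \<in> P" and y: "y \<in> P" and l: "0 \<le> l \<and> l \<le> 1"
    show "(1 - l) *\<^sub>R x + l *\<^sub>R y \<in> P"
    proof (cases "l = 0 \<or> l = 1")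
      case True then show ?thesis using x y by auto
    next
      case False
      then have l01: "0 < l" "l < 1" using l by auto
      have fx: "f x > 0" "f y > 0" using x y f0 by (auto simp: P_def less_le)
      have "0 < (1 - l) * f x powr p + l * f y powr p"
        using fx l01 by (intro add_pos_pos mult_pos_pos) auto
      then have "0 < ((1 - l) * f x powr p + l * f y powr p) powr (1 / p)" by simp
      also have "\<dots> \<le> f ((1 - l) * x + l * y)" by (rule pc) (use fx l01 in auto)
      finally show ?thesis by (simp add: P_def)
    qed
  qed
  have "closure P = {a..b}" using f_supp by (simp add: P_def fun_support_def)
  then have "{a<..<b} = interior P" using convex_interior_closure[OF convP] by simp
  then have pos: "f t > 0" if "a < t" "t < b" for t
  proof -
    have "t \<in> P" using that interior_subset[of P] \<open>{a<..<b} = interior P\<close> by auto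
    then have "f t \<noteq> 0" by (simp add: P_def)
    then show ?thesis using f0[of t] by linarith
  qed
  have mono: "f t powr p * (b - s) \<le> f s powr p * (b - t)" if ts: "a \<le> t" "t < s" "s < b" for t s
  proof (cases "f t = 0")
    case True then show ?thesis using ts by simp
  next
    case False
    then have ft: "f t > 0" using f0[of t] by simp
    define \<phi> where "\<phi> z = (z - s) / (z - t) * f t powr p" for z
    have bnd: "\<phi> z \<le> f s powr p" if z: "s < z" "z < b" for z
    proof -
      define l where "l = (s - t) / (z - t)"
      have l01: "0 < l" "l < 1" using z ts by (auto simp: l_def field_simps)
      have fz: "f z > 0" using pos z ts by auto
      have lz: "l * (z - t) = s - t" using z ts by (simp add: l_def)
      have "(1 - l) * t + l * z = t + l * (z - t)" by (simp add: algebra_simps)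
      then have eq: "(1 - l) * t + l * z = s" using lz by simp
      have "((1 - l) * f t powr p + l * f z powr p) powr (1 / p) \<le> f s"
        using pc[of t z l] ft fz l01 eq by simp
      moreover have "1 - l = (z - s) / (z - t)" using z ts by (simp add: l_def field_simps)
      ultimately show ?thesis unfolding \<phi>_def
        by (intro pc_pow[OF p]) (use l01 z ts in \<open>auto intro!: mult_nonneg_nonneg divide_nonneg_nonneg\<close>)
    qed
    have lim: "(\<phi> \<longlongrightarrow> (b - s) / (b - t) * f t powr p) (at_left b)"
      unfolding \<phi>_def using ts
      by (intro tendsto_intros tendsto_ident_at) auto
    have "(b - s) / (b - t) * f t powr p \<le> f s powr p"
      by (rule lim_left_bound[OF ts(3) bnd lim])
    then show ?thesis using ts by (simp add: field_simps)
  qed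
  have scale: "l powr (1/p) * f s \<le> f (a + l * (s - a))"
    if s: "a \<le> s" "s \<le> b" and l: "0 < l" "l \<le> 1" for s l
  proof (cases "l = 1 \<or> f s = 0 \<or> s = a")
    case True
    moreover have "l powr (1/p) \<le> 1" using l p by (intro powr_le1) auto
    ultimately show ?thesis using f0[of s] f0[of a] f0[of "a + l * (s - a)"]
      by (auto intro!: mult_left_le_one_le[OF _ powr_ge_zero])
  next
    case False
    then have l1: "l < 1" and fs: "f s > 0" and as: "a < s" using l f0[of s] s by auto
    define x where "x = a + l * (s - a)"
    have "l * (s - a) < 1 * (s - a)" by (rule mult_strict_right_mono) (use as l1 in auto)
    moreover have "0 < l * (s - a)" using as l by simp
    ultimately have ax: "a < x" "x < s" by (auto simp: x_def)
    define \<psi> where "\<psi> z = (x - z) / (s - z) * f s powr p" for z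
    have bnd: "\<psi> z \<le> f x powr p" if z: "a < z" "z < x" for z
    proof -
      define m where "m = (x - z) / (s - z)"
      have m01: "0 < m" "m < 1" using z ax by (auto simp: m_def field_simps)
      have fz: "f z > 0" using pos z ax s by auto
      have ms: "m * (s - z) = x - z" using z ax by (simp add: m_def)
      have "(1 - m) * z + m * s = z + m * (s - z)" by (simp add: algebra_simps)
      then have eq: "(1 - m) * z + m * s = x" using ms by simp
      have "((1 - m) * f z powr p + m * f s powr p) powr (1 / p) \<le> f x"
        using pc[of z s m] fz fs m01 eq by simp
      then show ?thesis unfolding \<psi>_def m_def[symmetric]
        by (intro pc_pow[OF p]) (use m01 z ax in \<open>auto intro!: mult_nonneg_nonneg divide_nonneg_nonneg\<close>)
    qed
    have lim: "(\<psi> \<longlongrightarrow> (x - a) / (s - a) * f s powr p) (at_right a)"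
      unfolding \<psi>_def using as
      by (intro tendsto_intros tendsto_ident_at) auto
    have "(x - a) / (s - a) * f s powr p \<le> f x powr p"
      by (rule lim_right_bound[OF ax(1) bnd lim])
    moreover have "(x - a) / (s - a) = l" using as by (simp add: x_def)
    ultimately have "l * f s powr p \<le> f x powr p" by simp
    then show ?thesis unfolding x_def[symmetric]
      by (intro pow_back[OF p]) (use l f0 in auto)
  qed
  define h where "h t = f t powr r" for t
  have h0: "h t \<ge> 0" for t by (simp add: h_def)
  have hB: "h t \<le> B powr r" for t unfolding h_def
    by (rule powr_mono2) (use r f0 fB in auto)
  have hm: "h \<in> borel_measurable borel" unfolding h_def[abs_def] using fm by measurable
  have hml: "h \<in> borel_measurable (lebesgue_on {a..b})"
    using hm by (intro measurable_restrict_space1 measurable_completion) simp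
  have thm': "(\<lambda>t. t * h t) \<in> borel_measurable (lebesgue_on {a..b})"
    using hm by (intro measurable_restrict_space1 measurable_completion) simp
  have hint: "h integrable_on {a..b}"
  proof (rule measurable_bounded_by_integrable_imp_integrable[OF hml])
    show "(\<lambda>_. B powr r) integrable_on {a..b}" by (rule integrable_const_ivl)
    show "norm (h x) \<le> B powr r" if "x \<in> {a..b}" for x using h0[of x] hB[of x] by simp
  qed simp
  have thint: "(\<lambda>t. t * h t) integrable_on {a..b}"
  proof (rule measurable_bounded_by_integrable_imp_integrable[OF thm'])
    show "(\<lambda>_. (\<bar>a\<bar> + \<bar>b\<bar>) * B powr r) integrable_on {a..b}" by (rule integrable_const_ivl)
    show "norm (x * h x) \<le> (\<bar>a\<bar> + \<bar>b\<bar>) * B powr r" if "x \<in> {a..b}" for x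
    proof -
      have "\<bar>x\<bar> \<le> \<bar>a\<bar> + \<bar>b\<bar>" using that by auto
      then show ?thesis using h0[of x] hB[of x]
        by (simp add: abs_mult) (intro mult_mono, auto)
    qed
  qed simp
  define I0 where "I0 = integral {a..b} h"
  define I1 where "I1 = integral {a..b} (\<lambda>t. t * h t)"
  have hI: "(h has_integral I0) {a..b}" unfolding I0_def by (rule integrable_integral[OF hint])
  have thI: "((\<lambda>t. t * h t) has_integral I1) {a..b}" unfolding I1_def by (rule integrable_integral[OF thint])
  define x0 where "x0 = (a + b) / 2"
  define x1 where "x1 = (x0 + b) / 2"
  have x01: "a < x0" "x0 < x1" "x1 < b" using ab by (auto simp: x0_def x1_def)
  have fx0: "f x0 > 0" using pos x01 by auto
  define \<kappa> where "\<kappa> = (f x0 powr p / 2) powr (r / p)"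
  have \<kappa>pos: "\<kappa> > 0" using fx0 by (simp add: \<kappa>_def)
  have hlow: "\<kappa> \<le> h s" if s: "s \<in> {x0..x1}" for s
  proof -
    have "f x0 powr p / 2 \<le> f s powr p"
    proof (cases "s = x0")
      case True then show ?thesis using fx0 by simp
    next
      case False
      then have "x0 < s" using s by auto
      then have m: "f x0 powr p * (b - s) \<le> f s powr p * (b - x0)"
        using mono[of x0 s] x01 s by auto
      have "b - x0 \<le> 2 * (b - s)" using s by (simp add: x1_def)
      then have "f x0 powr p * (b - x0) \<le> f x0 powr p * (2 * (b - s))" by (rule mult_left_mono) simp
      also have "\<dots> = 2 * (f x0 powr p * (b - s))" by (simp only: mult.left_commute)
      finally have "f x0 powr p * (b - x0) \<le> 2 * (f x0 powr p * (b - s))" .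
      also have "\<dots> \<le> 2 * (f s powr p * (b - x0))" using m by simp
      finally have "(b - x0) * f x0 powr p \<le> (b - x0) * (2 * f s powr p)" by (simp add: algebra_simps)
      then have "f x0 powr p \<le> 2 * f s powr p" using x01 by (simp add: mult_le_cancel_left_pos)
      then show ?thesis by simp
    qed
    then have "\<kappa> \<le> (f s powr p) powr (r / p)" unfolding \<kappa>_def
      by (intro powr_mono2) (use r p fx0 in auto)
    also have "\<dots> = h s" using p by (simp add: h_def powr_powr)
    finally show ?thesis .
  qed
  have I0pos: "I0 > 0"
  proof -
    have hint2: "h integrable_on {x0..x1}"
      by (rule integrable_subinterval_real[OF hint]) (use x01 in auto)
    have "0 < \<kappa> * (x1 - x0)" using \<kappa>pos x01 by simp
    also have "\<kappa> * (x1 - x0) = integral {x0..x1} (\<lambda>_. \<kappa>)" using x01 by simp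
    also have "\<dots> \<le> integral {x0..x1} h"
      by (rule integral_le[OF _ hint2]) (use hlow in auto)
    also have "\<dots> \<le> integral {a..b} h"
      by (rule integral_subset_le[OF _ hint2 hint]) (use x01 h0 in auto)
    finally show ?thesis by (simp add: I0_def)
  qed
  have I1z: "I1 = 0" using bary I0pos unfolding I0_def I1_def h_def[abs_def] by auto
  define \<beta> where "\<beta> = r / p"
  define c where "c = p / (2 * p + r)"
  define m where "m = a + c * (b - a)"
  have \<beta>pos: "\<beta> > 0" using r p by (simp add: \<beta>_def)
  have c01: "0 < c" "c < 1" using r p by (auto simp: c_def)
  have c\<beta>: "c * (\<beta> + 2) = 1"
  proof -
    have nz: "2 * p + r \<noteq> 0" "p \<noteq> 0" using r p by linarith+
    have "\<beta> + 2 = (2 * p + r) / p" using nz by (simp add: \<beta>_def field_simps)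
    then show ?thesis using nz by (simp add: c_def)
  qed
  have "c * (b - a) < 1 * (b - a)" by (rule mult_strict_right_mono) (use c01 ab in auto)
  moreover have "0 < c * (b - a)" using c01 ab by simp
  ultimately have am: "a < m" "m < b" by (auto simp: m_def)
  have monoR: "h t * (b - s) powr \<beta> \<le> h s * (b - t) powr \<beta>"
    if ts: "a \<le> t" "t < s" "s < b" for t s
  proof -
    have "(f t powr p * (b - s)) powr \<beta> \<le> (f s powr p * (b - t)) powr \<beta>"
      by (rule powr_mono2) (use \<beta>pos mono[OF ts] ts in auto)
    moreover have "(f t powr p * (b - s)) powr \<beta> = h t * (b - s) powr \<beta>"
      using ts p by (simp add: powr_mult powr_powr h_def \<beta>_def)
    moreover have "(f s powr p * (b - t)) powr \<beta> = h s * (b - t) powr \<beta>"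
      using ts p by (simp add: powr_mult powr_powr h_def \<beta>_def)
    ultimately show ?thesis by simp
  qed
  define K where "K = (b - m) powr \<beta>"
  have Kpos: "K > 0" using am by (simp add: K_def)
  define Q where "Q t = (t - m) * (h t * K - h m * (b - t) powr \<beta>)" for t
  have Qnn: "Q t \<ge> 0" if t: "t \<in> {a..b}" for t
  proof -
    consider "t < m" | "t = m" | "m < t" "t < b" | "t = b" using t by force
    then show ?thesis
    proof cases
      case 1
      then have "h t * K \<le> h m * (b - t) powr \<beta>" using monoR[of t m] t am by (simp add: K_def)
      then show ?thesis using 1 by (simp add: Q_def mult_nonpos_nonpos)
    next
      case 2 then show ?thesis by (simp add: Q_def)
    next
      case 3
      then have "h m * (b - t) powr \<beta> \<le> h t * K" using monoR[of m t] am by (simp add: K_def)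
      then show ?thesis using 3 by (simp add: Q_def)
    next
      case 4
      then show ?thesis using am h0[of b] Kpos by (simp add: Q_def)
    qed
  qed
  \<comment> \<open>integral of (t - m) (b - t)^beta vanishes\<close>
  define F where "F t = - ((t - m) * (b - t) powr (\<beta> + 1)) / (\<beta> + 1)
                       - (b - t) powr (\<beta> + 2) / ((\<beta> + 1) * (\<beta> + 2))" for t
  have cw: "continuous_on {a..b} (\<lambda>t. (b - t) powr e)" if "e > 0" for e
    by (rule continuous_on_powr') (use that in \<open>auto intro!: continuous_intros\<close>)
  have Fc: "continuous_on {a..b} F"
    unfolding F_def by (intro continuous_intros cw) (use \<beta>pos in auto)
  have Fd: "(F has_vector_derivative ((x - m) * (b - x) powr \<beta>)) (at x)" if x: "x \<in> {a<..<b}" for x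
  proof -
    have xb: "x < b" using x by simp
    have d1: "((\<lambda>t. (b - t) powr (\<beta> + 1)) has_real_derivative (- (\<beta> + 1) * (b - x) powr \<beta>)) (at x)"
      using dpow[OF xb, of "\<beta> + 1"] by simp
    have d2: "((\<lambda>t. (b - t) powr (\<beta> + 2)) has_real_derivative (- (\<beta> + 2) * (b - x) powr (\<beta> + 1))) (at x)"
    proof -
      have "\<beta> + 2 - 1 = \<beta> + 1" by simp
      then show ?thesis using dpow[OF xb, of "\<beta> + 2"] by (simp add: add.commute)
    qed
    have dl: "((\<lambda>t. t - m) has_real_derivative (1 - 0)) (at x)"
      by (rule DERIV_diff[OF DERIV_ident DERIV_const])
    have "(F has_real_derivative
          (- ((1 - 0) * (b - x) powr (\<beta> + 1) + (- (\<beta> + 1) * (b - x) powr \<beta>) * (x - m)) / (\<beta> + 1)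
           - (- (\<beta> + 2) * (b - x) powr (\<beta> + 1)) / ((\<beta> + 1) * (\<beta> + 2)))) (at x)"
      unfolding F_def[abs_def]
      by (intro DERIV_diff DERIV_cdivide DERIV_minus DERIV_mult dl d1 d2)
    moreover have "(- ((1 - 0) * (b - x) powr (\<beta> + 1) + (- (\<beta> + 1) * (b - x) powr \<beta>) * (x - m)) / (\<beta> + 1)
           - (- (\<beta> + 2) * (b - x) powr (\<beta> + 1)) / ((\<beta> + 1) * (\<beta> + 2))) = (x - m) * (b - x) powr \<beta>"
    proof -
      have nz: "\<beta> + 1 \<noteq> 0" "\<beta> + 2 \<noteq> 0" using \<beta>pos by linarith+
      have "- ((1 - 0) * A + (- (\<beta> + 1) * W) * y) / (\<beta> + 1) - (- (\<beta> + 2) * A) / ((\<beta> + 1) * (\<beta> + 2))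
            = y * W" for A W y :: real
      proof -
        have e0: "- (\<beta> + 2) * A = (- A) * (\<beta> + 2)" by (simp add: algebra_simps)
        have e1: "(- (\<beta> + 2) * A) / ((\<beta> + 1) * (\<beta> + 2)) = - A / (\<beta> + 1)"
          unfolding e0 using nonzero_mult_divide_mult_cancel_right[OF nz(2), of "- A" "\<beta> + 1"] by simp
        have e2: "- ((1 - 0) * A + (- (\<beta> + 1) * W) * y) / (\<beta> + 1) = - A / (\<beta> + 1) + y * W"
          using nz(1) by (simp add: field_simps)
        show ?thesis unfolding e1 e2 by simp
      qed
      then show ?thesis .
    qed
    ultimately show ?thesis by (simp add: has_real_derivative_iff_has_vector_derivative)
  qed
  have Fb: "F b = 0" using \<beta>pos by (simp add: F_def)
  have Fa: "F a = 0"
  proof -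
    define D where "D = b - a"
    have D: "D > 0" using ab by (simp add: D_def)
    have "\<beta> + 2 = (\<beta> + 1) + 1" by simp
    then have "D powr (\<beta> + 2) = D powr (\<beta> + 1) * D powr 1" by (simp only: powr_add)
    then have "D powr (\<beta> + 2) = D powr (\<beta> + 1) * D" using D by simp
    moreover have "a - m = - c * D" by (simp add: m_def D_def)
    ultimately have "F a = c * D * D powr (\<beta> + 1) / (\<beta> + 1) - D powr (\<beta> + 1) * D / ((\<beta> + 1) * (\<beta> + 2))"
      by (simp add: F_def D_def[symmetric])
    also have "\<dots> = 0"
    proof -
      obtain q1 q2 E where q: "q1 = \<beta> + 1" "q2 = \<beta> + 2" "E = D powr (\<beta> + 1)" by blast
      have nz: "q1 \<noteq> 0" "q2 \<noteq> 0" using q \<beta>pos by linarith+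
      have cq: "c = 1 / q2" using c\<beta> nz q by (simp add: eq_divide_eq)
      have "c * D * E / q1 - E * D / (q1 * q2) = 0" using nz unfolding cq by (simp add: field_simps)
      then show ?thesis using q by simp
    qed
    finally show ?thesis .
  qed
  have wI: "((\<lambda>t. (t - m) * (b - t) powr \<beta>) has_integral 0) {a..b}"
    using fundamental_theorem_of_calculus_interior[OF _ Fc Fd] ab Fa Fb by simp
  have QI: "(Q has_integral (I1 * K - I0 * (K * m) - 0 * h m)) {a..b}"
  proof -
    have "((\<lambda>t. (t * h t) * K - h t * (K * m) - ((t - m) * (b - t) powr \<beta>) * h m) has_integral
           (I1 * K - I0 * (K * m) - 0 * h m)) {a..b}"
      by (intro has_integral_diff has_integral_mult_left thI hI wI)
    moreover have "(\<lambda>t. (t * h t) * K - h t * (K * m) - ((t - m) * (b - t) powr \<beta>) * h m) = Q"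
      by (rule ext) (simp add: Q_def algebra_simps)
    ultimately show ?thesis by simp
  qed
  have "0 \<le> I1 * K - I0 * (K * m) - 0 * h m"
    by (rule has_integral_nonneg[OF QI]) (use Qnn in auto)
  then have "I0 * K * m \<le> 0" using I1z by (simp add: algebra_simps)
  then have m0: "m \<le> 0" using I0pos Kpos by (simp add: mult_le_0_iff)
  have fint: "f integrable_on {a..b}" using fI by blast
  have stepB: "l powr ((p + 1) / p) * V \<le> integral {a..d} f"
    if d: "a < d" "d \<le> b" and ldef: "l = (d - a) / (b - a)" for d l
  proof -
    have l: "0 < l" "l \<le> 1" using d ab by (auto simp: ldef field_simps)
    have fintd: "f integrable_on {a..d}"
      by (rule integrable_subinterval_real[OF fint]) (use d in auto)
    define Id where "Id = integral {a..d} f"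
    have fId: "(f has_integral Id) (cbox a d)" using fintd by (simp add: Id_def integrable_integral)
    have aff: "((\<lambda>x. f (l *\<^sub>R x + (a - l * a))) has_integral (1 / (\<bar>l\<bar> ^ DIM(real))) *\<^sub>R Id)
               ((\<lambda>x. (1 / l) *\<^sub>R x + - ((1 / l) *\<^sub>R (a - l * a))) ` cbox a d)"
      by (rule has_integral_affinity[OF fId]) (use l in simp)
    have img: "(\<lambda>x. (1 / l) *\<^sub>R x + - ((1 / l) *\<^sub>R (a - l * a))) ` cbox a d = {a..b}"
    proof -
      have e1: "(1 / l) * a + - ((1 / l) * (a - l * a)) = a" using aff_e1 l by blast
      have e2: "(1 / l) * d + - ((1 / l) * (a - l * a)) = b" unfolding ldef by (rule aff_e2) (use ab d in auto)
      have "(\<lambda>x. (1 / l) *\<^sub>R x + - ((1 / l) *\<^sub>R (a - l * a))) ` cbox a d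
          = cbox ((1 / l) *\<^sub>R a + - ((1 / l) *\<^sub>R (a - l * a))) ((1 / l) *\<^sub>R d + - ((1 / l) *\<^sub>R (a - l * a)))"
        by (subst image_affinity_cbox) (use l d in simp)
      also have "\<dots> = {a..b}" unfolding real_scaleR_def e1 e2 cbox_interval ..
      finally show ?thesis .
    qed
    have gI: "((\<lambda>x. f (a + l * (x - a))) has_integral Id / l) {a..b}"
    proof -
      have "(\<lambda>x. f (l *\<^sub>R x + (a - l * a))) = (\<lambda>x. f (a + l * (x - a)))"
        by (rule ext) (simp add: algebra_simps)
      then show ?thesis using aff l unfolding img by simp
    qed
    have sI: "((\<lambda>x. l powr (1/p) * f x) has_integral l powr (1/p) * V) {a..b}"
      by (rule has_integral_mult_right[OF fI])
    have "l powr (1/p) * V \<le> Id / l"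
      by (rule has_integral_le[OF sI gI]) (use scale l in auto)
    then have "l * (l powr (1/p) * V) \<le> Id" using l by (simp add: field_simps)
    moreover have "l * l powr (1/p) = l powr ((p + 1) / p)"
    proof -
      have "(p + 1) / p = 1 + 1 / p" using p by (simp add: field_simps)
      then show ?thesis using l by (simp add: powr_add)
    qed
    ultimately show ?thesis by (simp add: Id_def mult.assoc[symmetric])
  qed
  have a0: "a < 0" using am m0 by simp
  define d where "d = min 0 b"
  define l where "l = (d - a) / (b - a)"
  have ad: "a < d" "d \<le> b" using a0 ab by (auto simp: d_def)
  have lc: "c \<le> l"
  proof (cases "b \<le> 0")
    case True
    then have "l = 1" using ab by (simp add: l_def d_def)
    then show ?thesis using c01 by simp
  next
    case False
    then have "l = - a / (b - a)" by (simp add: l_def d_def)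
    moreover have "c * (b - a) \<le> - a" using m0 by (simp add: m_def)
    then have "c \<le> (- a) / (b - a)" using ab by (subst pos_le_divide_eq) auto
    ultimately show ?thesis by simp
  qed
  have "c powr ((p + 1) / p) * V \<le> l powr ((p + 1) / p) * V"
    by (intro mult_right_mono powr_mono2) (use c01 lc p Vpos in auto)
  also have "\<dots> \<le> integral {a..d} f" by (rule stepB[OF ad l_def])
  finally show ?thesis using a0 ab by (simp add: c_def d_def)
qed



theorem corollary2p2:
  fixes K :: "'a::euclidean_space set" and u :: 'a
    and g :: "'b::euclidean_space \<Rightarrow> 'a"
    and f :: "real \<Rightarrow> real" and r p a b :: real
  assumes r: "r > 0" and p: "p > 0"
    and u: "norm u = 1"
    and dim: "DIM('b) + 1 = DIM('a)"
    and g_lin: "linear g" and g_iso: "\<And>y. norm (g y) = norm y"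
    and g_range: "range g = {x. x \<bullet> u = 0}"
    and K: "compact K" "interior K \<noteq> {}"
    and f_def: "\<And>t. f t = measure lebesgue {y. t *\<^sub>R u + g y \<in> K}"
    and f_conc: "p_concave p f"
    and f_supp: "fun_support f = {a..b}"
    and bary: "integral {a..b} (\<lambda>t. t * f t powr r) / integral {a..b} (\<lambda>t. f t powr r) = 0"
  shows "measure lebesgue (K \<inter> {x. x \<bullet> u \<le> 0}) / measure lebesgue K
           \<ge> (p / (2 * p + r)) powr ((p + 1) / p)"
proof -
  note SL = section_lemma[OF u dim g_lin g_iso g_range K(1)]
  have fdef': "f t = measure lborel {y. t *\<^sub>R u + g y \<in> K}" for t
    using SL(4)[of t] by (simp add: f_def borel_compact)
  have feq: "f = (\<lambda>t. measure lborel {y. t *\<^sub>R u + g y \<in> K})" by (rule ext) (rule fdef')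
  have fm: "f \<in> borel_measurable borel" unfolding feq by (rule SL(1))
  obtain B where fB: "\<And>t. f t \<le> B" using SL(3) feq by auto
  have fIU: "(f has_integral measure lborel K) UNIV" unfolding feq by (rule SL(2))
  have out: "f t = 0" if "t \<notin> {a..b}" for t
    using that closure_subset[of "{t. f t \<noteq> 0}"] f_supp by (auto simp: fun_support_def)
  have fI: "(f has_integral measure lborel K) {a..b}"
  proof -
    have "(\<lambda>x. if x \<in> {a..b} then f x else 0) = f" using out by auto
    then show ?thesis using fIU has_integral_restrict_UNIV[of "{a..b}" f] by simp
  qed
  have VK: "measure lborel K > 0"
  proof -
    obtain x where "x \<in> interior K" using K(2) by auto
    then obtain e where e: "e > 0" "ball x e \<subseteq> K" using mem_interior by blast
    have "0 < measure lborel (ball x e)" using content_ball_pos[OF e(1)] by simp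
    also have "\<dots> \<le> measure lborel K"
      by (rule measure_mono_fmeasurable[OF e(2)]) (auto intro: fmeasurable_compact K(1))
    finally show ?thesis .
  qed
  have main: "a < 0 \<and> a < b \<and> (p / (2 * p + r)) powr ((p + 1) / p) * measure lborel K \<le> integral {a..min 0 b} f"
    by (rule oneD[OF r p f_conc fm fB f_supp fI VK bary])
  define d where "d = min 0 b"
  define S' where "S' = K \<inter> {x. x \<bullet> u \<le> 0}"
  have cS': "compact S'" unfolding S'_def
    by (intro compact_Int_closed K(1) closed_Collect_le continuous_intros)
  note SL2 = section_lemma[OF u dim g_lin g_iso g_range cS']
  have uu: "u \<bullet> u = 1" using u by (simp add: norm_eq_sqrt_inner)
  have gu: "g y \<bullet> u = 0" for y
  proof -
    have "g y \<in> range g" by simp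
    then show ?thesis using g_range by simp
  qed
  have sec2: "measure lborel {y. t *\<^sub>R u + g y \<in> S'} = (if t \<in> {a..d} then f t else 0)" for t
  proof -
    have ip: "(t *\<^sub>R u + g y) \<bullet> u = t" for y by (simp add: inner_add_left uu gu)
    show ?thesis
    proof (cases "t \<le> 0")
      case True
      then have "{y. t *\<^sub>R u + g y \<in> S'} = {y. t *\<^sub>R u + g y \<in> K}" by (auto simp: S'_def ip)
      then show ?thesis using True out[of t] by (auto simp: fdef' d_def)
    next
      case False
      then have "{y. t *\<^sub>R u + g y \<in> S'} = {}" by (auto simp: S'_def ip)
      then show ?thesis using False by (simp add: d_def)
    qed
  qed
  have "((\<lambda>t. if t \<in> {a..d} then f t else 0) has_integral measure lborel S') UNIV"
    using SL2(2) by (simp add: sec2)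
  then have "(f has_integral measure lborel S') {a..d}" by (rule has_integral_restrict_UNIV[THEN iffD1])
  then have IS': "integral {a..d} f = measure lborel S'" by (simp add: integral_unique)
  have c1: "measure lebesgue K = measure lborel K" using K(1) by (simp add: borel_compact)
  have c2: "measure lebesgue (K \<inter> {x. x \<bullet> u \<le> 0}) = measure lborel S'"
    using cS' by (simp add: borel_compact S'_def)
  have "(p / (2 * p + r)) powr ((p + 1) / p) * measure lborel K \<le> measure lborel S'"
    using main IS' by (simp add: d_def)
  then show ?thesis unfolding c1 c2 using VK by (simp add: pos_le_divide_eq)
qed

end
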